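(* Let $\mu\in\mathbb{Z}_{\ge0}^m$ and let $\nu\in\{0,\dots,m\}^n$ be non-increasing ($\nu_1\ge\dots\ge\nu_n$), and let $t=\alpha^\mu\beta^\nu$. Let $F_\nu\in\{0,1\}^{m\times n}$ be the bottom-left flushed matrix with $cs(F_\nu)=\nu$. For $\mathcal{R}\in\{0,1\}^{m\times n}$ the following are equivalent: (1) $\mathcal{R}$ is a res-representation of $t$; (2) $(\mathcal{R},F_\nu)$ is a sorted-flushed syl-representation of $t$.
   Context: For $M\in\{0,1\}^{m\times n}$: $\bar M_{ij}=1-M_{ij}$; $rs(M)=(\sum_j M_{ij})_i$; $cs(M)=(\sum_i M_{ij})_j$; $ars(M)=(i+\sum_j M_{ij})_{i=1..m}$; $acs(M)=(j+\sum_i M_{ij})_{j=1..n}$. $M$ is bottom-left flushed if whenever $M_{ij}=1$, also $M_{i'j'}=1$ for all $i'\ge i$, $j'\le j$ (so $F_\nu$ has $(F_\nu)_{ij}=1$ iff $i>m-\nu_j$). A res-representation of $\alpha^\mu\beta^\nu$ is $\mathcal{R}\in\{0,1\}^{m\times n}$ with $rs(\mathcal{R})=\mu$, $cs(\bar{\mathcal{R}})=\nu$. $PC(A,B)$ means $\{acs(A)_1,\dots,acs(A)_n,ars(B)_1,\dots,ars(B)_m\}=\{1,\dots,m+n\}$. A syl-representation of $\alpha^\mu\beta^\nu$ is a pair $(\mathcal{S}_1,\mathcal{S}_2)$ in $\{0,1\}^{m\times n}$ with $rs(\mathcal{S}_1)=\mu$, $cs(\mathcal{S}_2)=\nu$,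 $PC(\mathcal{S}_1,\mathcal{S}_2)$. A pair $(A,B)$ is sorted if $acs(A)$ and $ars(B)$ are strictly increasing, flushed if $B$ is bottom-left flushed, sorted-flushed if both. *)

theory Defs
  imports Main
begin

text \<open>Matrices in {0,1}^{m x n} are functions nat => nat => nat, with rows indexed
  by 1..m and columns by 1..n (entries outside this range are irrelevant).
  Vectors are functions nat => nat indexed from 1.\<close>

definition is01 :: "nat \<Rightarrow> nat \<Rightarrow> (nat \<Rightarrow> nat \<Rightarrow> nat) \<Rightarrow> bool" where
  "is01 m n M \<longleftrightarrow> (\<forall>i\<in>{1..m}. \<forall>j\<in>{1..n}. M i j \<in> {0,1})"

definition compl01 :: "(nat \<Rightarrow> nat \<Rightarrow> nat) \<Rightarrow> (nat \<Rightarrow> nat \<Rightarrow> nat)" where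
  "compl01 M = (\<lambda>i j. 1 - M i j)"

definition rs :: "nat \<Rightarrow> (nat \<Rightarrow> nat \<Rightarrow> nat) \<Rightarrow> nat \<Rightarrow> nat" where
  "rs n M i = (\<Sum>j=1..n. M i j)"

definition cs :: "nat \<Rightarrow> (nat \<Rightarrow> nat \<Rightarrow> nat) \<Rightarrow> nat \<Rightarrow> nat" where
  "cs m M j = (\<Sum>i=1..m. M i j)"

definition ars :: "nat \<Rightarrow> (nat \<Rightarrow> nat \<Rightarrow> nat) \<Rightarrow> nat \<Rightarrow> nat" where
  "ars n M i = i + rs n M i"

definition acs :: "nat \<Rightarrow> (nat \<Rightarrow> nat \<Rightarrow> nat) \<Rightarrow> nat \<Rightarrow> nat" where
  "acs m M j = j + cs m M j"

definition bl_flushed :: "nat \<Rightarrow> nat \<Rightarrow> (nat \<Rightarrow> nat \<Rightarrow> nat) \<Rightarrow> bool" where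
  "bl_flushed m n M \<longleftrightarrow>
     (\<forall>i\<in>{1..m}. \<forall>j\<in>{1..n}. \<forall>i'\<in>{1..m}. \<forall>j'\<in>{1..n}.
        M i j = 1 \<and> i \<le> i' \<and> j' \<le> j \<longrightarrow> M i' j' = 1)"

definition Fmat :: "nat \<Rightarrow> (nat \<Rightarrow> nat) \<Rightarrow> (nat \<Rightarrow> nat \<Rightarrow> nat)" where
  "Fmat m nu = (\<lambda>i j. if i > m - nu j then 1 else 0)"

definition res_rep :: "nat \<Rightarrow> nat \<Rightarrow> (nat \<Rightarrow> nat) \<Rightarrow> (nat \<Rightarrow> nat) \<Rightarrow> (nat \<Rightarrow> nat \<Rightarrow> nat) \<Rightarrow> bool" where
  "res_rep m n mu nu R \<longleftrightarrow> is01 m n R \<and>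
     (\<forall>i\<in>{1..m}. rs n R i = mu i) \<and> (\<forall>j\<in>{1..n}. cs m (compl01 R) j = nu j)"

definition PC :: "nat \<Rightarrow> nat \<Rightarrow> (nat \<Rightarrow> nat \<Rightarrow> nat) \<Rightarrow> (nat \<Rightarrow> nat \<Rightarrow> nat) \<Rightarrow> bool" where
  "PC m n A B \<longleftrightarrow> acs m A ` {1..n} \<union> ars n B ` {1..m} = {1..m+n}"

definition syl_rep :: "nat \<Rightarrow> nat \<Rightarrow> (nat \<Rightarrow> nat) \<Rightarrow> (nat \<Rightarrow> nat)
    \<Rightarrow> (nat \<Rightarrow> nat \<Rightarrow> nat) \<Rightarrow> (nat \<Rightarrow> nat \<Rightarrow> nat) \<Rightarrow> bool" where
  "syl_rep m n mu nu S1 S2 \<longleftrightarrow> is01 m n S1 \<and> is01 m n S2 \<and>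
     (\<forall>i\<in>{1..m}. rs n S1 i = mu i) \<and> (\<forall>j\<in>{1..n}. cs m S2 j = nu j) \<and> PC m n S1 S2"

definition sorted_pair :: "nat \<Rightarrow> nat \<Rightarrow> (nat \<Rightarrow> nat \<Rightarrow> nat) \<Rightarrow> (nat \<Rightarrow> nat \<Rightarrow> nat) \<Rightarrow> bool" where
  "sorted_pair m n A B \<longleftrightarrow>
     (\<forall>j\<in>{1..n}. \<forall>j'\<in>{1..n}. j < j' \<longrightarrow> acs m A j < acs m A j') \<and>
     (\<forall>i\<in>{1..m}. \<forall>i'\<in>{1..m}. i < i' \<longrightarrow> ars n B i < ars n B i')"

definition flushed_pair :: "nat \<Rightarrow> nat \<Rightarrow> (nat \<Rightarrow> nat \<Rightarrow> nat) \<Rightarrow> (nat \<Rightarrow> nat \<Rightarrow> nat) \<Rightarrow> bool" where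
  "flushed_pair m n A B \<longleftrightarrow> bl_flushed m n B"

definition sorted_flushed :: "nat \<Rightarrow> nat \<Rightarrow> (nat \<Rightarrow> nat \<Rightarrow> nat) \<Rightarrow> (nat \<Rightarrow> nat \<Rightarrow> nat) \<Rightarrow> bool" where
  "sorted_flushed m n A B \<longleftrightarrow> sorted_pair m n A B \<and> flushed_pair m n A B"

end

theory Submission
  imports Defs
begin

lemma cs_F:
  assumes "nu j \<le> m"
  shows "cs m (Fmat m nu) j = nu j"
proof -
  have "cs m (Fmat m nu) j = card ({1..m} \<inter> {i. m - nu j < i})"
    by (simp add: cs_def Fmat_def sum.If_cases)
  also have "{1..m} \<inter> {i. m - nu j < i} = {m - nu j<..m}" by auto
  finally show ?thesis using assms by simp
qed

lemma rs_F: "rs n (Fmat m nu) i = card {j\<in>{1..n}. m - nu j < i}"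
  unfolding rs_def Fmat_def by (simp add: sum.If_cases) (rule arg_cong[where f=card]; auto)

lemma strict_same_image:
  fixes f g :: "nat \<Rightarrow> nat"
  assumes f: "\<forall>j\<in>{1..n}. \<forall>j'\<in>{1..n}. j < j' \<longrightarrow> f j < f j'"
    and g: "\<forall>j\<in>{1..n}. \<forall>j'\<in>{1..n}. j < j' \<longrightarrow> g j < g j'"
    and im: "f ` {1..n} = g ` {1..n}"
    and j: "j \<in> {1..n}"
  shows "f j = g j"
proof -
  have sf: "sorted_wrt (<) (map f [1..<Suc n])"
    unfolding sorted_wrt_iff_nth_less using f by (auto simp del: upt_Suc)
  have sg: "sorted_wrt (<) (map g [1..<Suc n])"
    unfolding sorted_wrt_iff_nth_less using g by (auto simp del: upt_Suc)
  have setf: "set (map f [1..<Suc n]) = f ` {1..n}" for f :: "nat \<Rightarrow> nat"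
    by (simp del: upt_Suc add: atLeastLessThanSuc_atLeastAtMost)
  have "map f [1..<Suc n] = map g [1..<Suc n]"
    using sf sg im unfolding strict_sorted_iff
    by (intro sorted_distinct_set_unique) (simp_all only: setf)
  moreover have jl: "j - 1 < length [1..<Suc n]" using j by auto
  ultimately have "f ([1..<Suc n] ! (j - 1)) = g ([1..<Suc n] ! (j - 1))"
    by (metis nth_map)
  moreover have "[1..<Suc n] ! (j - 1) = j" using j by (simp del: upt_Suc)
  ultimately show ?thesis by simp
qed

lemma partition:
  fixes nu :: "nat \<Rightarrow> nat"
  assumes nu_range: "\<forall>j\<in>{1..n}. nu j \<le> m"
    and nu_noninc: "\<forall>j\<in>{1..n}. \<forall>j'\<in>{1..n}. j \<le> j' \<longrightarrow> nu j' \<le> nu j"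
  defines "G \<equiv> (\<lambda>j. j + (m - nu j)) ` {1..n}"
    and "H \<equiv> ars n (Fmat m nu) ` {1..m}"
  shows "G \<inter> H = {}" "G \<union> H = {1..m+n}" "card G = n" "card H = m"
    "\<forall>i\<in>{1..m}. \<forall>i'\<in>{1..m}. i < i' \<longrightarrow> ars n (Fmat m nu) i < ars n (Fmat m nu) i'"
proof -
  define c where "c i = card {j\<in>{1..n}. m - nu j < i}" for i
  have arsF: "ars n (Fmat m nu) i = i + c i" for i
    by (simp add: ars_def rs_F c_def)
  have key: "j \<le> c i \<longleftrightarrow> m - nu j < i" if "j \<in> {1..n}" for i j
  proof
    assume "m - nu j < i"
    then have "{1..j} \<subseteq> {j\<in>{1..n}. m - nu j < i}"
      using that nu_noninc by force
    then have "card {1..j} \<le> c i" unfolding c_def by (intro card_mono) auto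
    then show "j \<le> c i" by simp
  next
    assume "j \<le> c i"
    show "m - nu j < i"
    proof (rule ccontr)
      assume "\<not> m - nu j < i"
      have "x \<le> j - 1" if x: "x \<in> {1..n}" "m - nu x < i" for x
      proof (rule ccontr)
        assume "\<not> x \<le> j - 1"
        then have "nu x \<le> nu j" using nu_noninc x \<open>j \<in> {1..n}\<close> by auto
        then show False using x \<open>\<not> m - nu j < i\<close> by linarith
      qed
      then have "{j\<in>{1..n}. m - nu j < i} \<subseteq> {1..j-1}" by auto
      then have "c i \<le> card {1..j-1}" unfolding c_def by (intro card_mono) auto
      then show False using \<open>j \<le> c i\<close> that by auto
    qed
  qed
  have cmono: "c i \<le> c i'" if "i \<le> i'" for i i'
    unfolding c_def using that by (intro card_mono) auto
  have cle: "c i \<le> n" for i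
    unfolding c_def by (rule order_trans[OF card_mono[of "{1..n}"]]) auto
  show smono: "\<forall>i\<in>{1..m}. \<forall>i'\<in>{1..m}. i < i' \<longrightarrow> ars n (Fmat m nu) i < ars n (Fmat m nu) i'"
    using cmono by (auto simp: arsF add_less_le_mono)
  show disj: "G \<inter> H = {}"
  proof (rule ccontr)
    assume "G \<inter> H \<noteq> {}"
    then obtain x where "x \<in> G" "x \<in> H" by blast
    then obtain j i where j: "j \<in> {1..n}" and i: "i \<in> {1..m}"
      and "x = j + (m - nu j)" "x = ars n (Fmat m nu) i"
      unfolding G_def H_def by blast
    then have eq: "j + (m - nu j) = i + c i" using arsF by simp
    show False
    proof (cases "j \<le> c i")
      case True
      then have "m - nu j < i" using key j by blast
      then show ?thesis using eq True by linarith
    next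
      case False
      then have "\<not> m - nu j < i" using key j by blast
      then show ?thesis using eq False by linarith
    qed
  qed
  show cG: "card G = n"
  proof -
    have "inj_on (\<lambda>j. j + (m - nu j)) {1..n}"
    proof (rule inj_onI)
      fix x y assume x: "x \<in> {1..n}" and y: "y \<in> {1..n}" and e: "x + (m - nu x) = y + (m - nu y)"
      show "x = y"
      proof (rule ccontr)
        assume "x \<noteq> y"
        then have "x < y \<or> y < x" by auto
        then show False
        proof
          assume "x < y" then have "nu y \<le> nu x" using nu_noninc x y by auto
          then show False using e \<open>x < y\<close> by linarith
        next
          assume "y < x" then have "nu x \<le> nu y" using nu_noninc x y by auto
          then show False using e \<open>y < x\<close> by linarith
        qed
      qed
    qed
    then show ?thesis unfolding G_def by (simp add: card_image)
  qed
  show cH: "card H = m"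
  proof -
    have "inj_on (ars n (Fmat m nu)) {1..m}"
      using smono by (metis linorder_inj_onI' nat_less_le)
    then show ?thesis unfolding H_def by (simp add: card_image)
  qed
  have sub: "G \<union> H \<subseteq> {1..m+n}"
  proof
    fix x assume "x \<in> G \<union> H"
    then show "x \<in> {1..m+n}"
    proof
      assume "x \<in> G"
      then obtain j where "j \<in> {1..n}" "x = j + (m - nu j)" unfolding G_def by blast
      then show ?thesis by auto
    next
      assume "x \<in> H"
      then obtain i where "i \<in> {1..m}" "x = i + c i" unfolding H_def arsF by blast
      then show ?thesis using cle[of i] by auto
    qed
  qed
  have "card (G \<union> H) = m + n"
    using disj cG cH by (simp add: card_Un_disjoint G_def H_def)
  then show "G \<union> H = {1..m+n}" using sub
    by (intro card_subset_eq) auto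
qed

theorem mainTheorem6:
  fixes m n :: nat and mu nu :: "nat \<Rightarrow> nat" and R :: "nat \<Rightarrow> nat \<Rightarrow> nat"
  assumes nu_range: "\<forall>j\<in>{1..n}. nu j \<le> m"
    and nu_noninc: "\<forall>j\<in>{1..n}. \<forall>j'\<in>{1..n}. j \<le> j' \<longrightarrow> nu j' \<le> nu j"
    and R01: "is01 m n R"
  shows "res_rep m n mu nu R \<longleftrightarrow>
         (syl_rep m n mu nu R (Fmat m nu) \<and> sorted_flushed m n R (Fmat m nu))"
proof -
  define G where "G = (\<lambda>j. j + (m - nu j)) ` {1..n}"
  define H where "H = ars n (Fmat m nu) ` {1..m}"
  note P = partition[OF nu_range nu_noninc, folded G_def H_def]
  have csR: "cs m (compl01 R) j = m - cs m R j" if "j \<in> {1..n}" for j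
  proof -
    have "cs m (compl01 R) j = (\<Sum>i=1..m. 1 - R i j)" by (simp add: cs_def compl01_def)
    also have "\<dots> = (\<Sum>i=1..m. 1) - (\<Sum>i=1..m. R i j)"
    proof (rule sum_subtractf_nat)
      fix i assume "i \<in> {1..m}"
      then have "R i j \<in> {0,1}" using R01 that unfolding is01_def by blast
      then show "R i j \<le> 1" by auto
    qed
    finally show ?thesis by (simp add: cs_def)
  qed
  have csRle: "cs m R j \<le> m" if "j \<in> {1..n}" for j
  proof -
    have "cs m R j \<le> (\<Sum>i=1..m. 1)" unfolding cs_def
    proof (rule sum_mono)
      fix i assume "i \<in> {1..m}"
      then have "R i j \<in> {0,1}" using R01 that unfolding is01_def by blast
      then show "R i j \<le> 1" by auto
    qed
    then show ?thesis by simp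
  qed
  have F01: "is01 m n (Fmat m nu)" by (simp add: is01_def Fmat_def)
  have csF: "\<forall>j\<in>{1..n}. cs m (Fmat m nu) j = nu j" using cs_F nu_range by blast
  have flush: "bl_flushed m n (Fmat m nu)"
    unfolding bl_flushed_def Fmat_def
  proof (intro ballI impI)
    fix i j i' j' assume j: "j \<in> {1..n}" and j': "j' \<in> {1..n}"
      and h: "(if m - nu j < i then 1 else 0) = (1::nat) \<and> i \<le> i' \<and> j' \<le> j"
    then have "nu j \<le> nu j'" using nu_noninc by auto
    moreover have "m - nu j < i" using h by (auto split: if_splits)
    ultimately show "(if m - nu j' < i' then 1 else 0) = (1::nat)" using h by auto
  qed
  have gmono: "\<forall>j\<in>{1..n}. \<forall>j'\<in>{1..n}. j < j' \<longrightarrow> j + (m - nu j) < j' + (m - nu j')"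
  proof (intro ballI impI)
    fix j j' assume "j \<in> {1..n}" "j' \<in> {1..n}" "j < j'"
    then have "nu j' \<le> nu j" using nu_noninc by auto
    then show "j + (m - nu j) < j' + (m - nu j')" using \<open>j < j'\<close> by linarith
  qed
  show ?thesis
  proof
    assume rr: "res_rep m n mu nu R"
    then have acsR: "acs m R j = j + (m - nu j)" if "j \<in> {1..n}" for j
    proof -
      have "nu j = m - cs m R j" using rr csR that unfolding res_rep_def by simp
      then show ?thesis using csRle[OF that] unfolding acs_def by simp
    qed
    have "acs m R ` {1..n} = G" unfolding G_def using acsR by auto
    then have "PC m n R (Fmat m nu)" unfolding PC_def using P(2) H_def by simp
    moreover have "sorted_pair m n R (Fmat m nu)"
      unfolding sorted_pair_def using P(5) gmono acsR by simp
    ultimately show "syl_rep m n mu nu R (Fmat m nu) \<and> sorted_flushed m n R (Fmat m nu)"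
      using rr R01 F01 csF flush
      unfolding syl_rep_def res_rep_def sorted_flushed_def flushed_pair_def by blast
  next
    assume h: "syl_rep m n mu nu R (Fmat m nu) \<and> sorted_flushed m n R (Fmat m nu)"
    define A where "A = acs m R ` {1..n}"
    have un: "A \<union> H = {1..m+n}" using h unfolding syl_rep_def PC_def A_def H_def by blast
    have "G \<subseteq> A" using un P(1) P(2) by blast
    moreover have "card A \<le> card G" unfolding A_def
      using card_image_le[of "{1..n}" "acs m R"] P(3) by simp
    ultimately have "G = A" by (intro card_seteq) (auto simp: A_def)
    then have AG: "A = G" by simp
    have amono: "\<forall>j\<in>{1..n}. \<forall>j'\<in>{1..n}. j < j' \<longrightarrow> acs m R j < acs m R j'"
      using h unfolding sorted_flushed_def sorted_pair_def by blast
    have "acs m R j = j + (m - nu j)" if "j \<in> {1..n}" for j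
      using strict_same_image[OF amono gmono _ that] AG unfolding A_def G_def by simp
    then have "cs m R j = m - nu j" if "j \<in> {1..n}" for j
      using that unfolding acs_def by auto
    then have "\<forall>j\<in>{1..n}. cs m (compl01 R) j = nu j"
      using csR nu_range by auto
    then show "res_rep m n mu nu R"
      using h R01 unfolding res_rep_def syl_rep_def by blast
  qed
qed

end
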